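(* Let $n\ge 2$ and let $d_1\ge d_2\ge\cdots\ge d_n\ge 1$ be integers, with node $k$ of $V=\{1,\dots,n\}$ assigned the value $d_k$. Fix a node $i\in V$ and a set $X(i)=\{j_1,\dots,j_m\}\subset V\setminus\{i\}$ with $m\le n-1-d_i$. Let $L(i)$ be the set of the $d_i$ smallest indices in $V\setminus(X(i)\cup\{i\})$. Then there is a simple graph $G(V,E)$ in which each node $k$ has degree $d_k$ and such that $(i,j)\notin E$ for all $j\in X(i)$, if and only if the sequence $d'|_{L(i)}$ reduced by $L(i)$ is graphical.
   Context: A sequence of nonnegative integers $(e_1,\dots,e_n)$ is graphical if there is a simple undirected graph (no loops, no multiple edges) on vertex set $\{1,\dots,n\}$ in which vertex $k$ has degree $e_k$ for every $k$ (vertices of degree $0$ are allowed). For a set $A(i)\subset V\setminus\{i\}$ with $|A(i)|=d_i$, the sequence reduced by $A(i)$ is $d'|_{A(i)}=(d'_1,\dots,d'_n)$ with $d'_k=d_k-1$ if $k\in A(i)$, $d'_k=d_k$ if $k\in V\setminus(A(i)\cup\{i\})$, and $d'_i=0$. *)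

theory Defs
  imports Main
begin

definition simple_graph :: "nat \<Rightarrow> (nat \<Rightarrow> nat \<Rightarrow> bool) \<Rightarrow> bool" where
  "simple_graph n E \<longleftrightarrow>
     (\<forall>x y. E x y \<longrightarrow> x \<in> {1..n} \<and> y \<in> {1..n}) \<and>
     (\<forall>x y. E x y \<longrightarrow> E y x) \<and>
     (\<forall>x. \<not> E x x)"

definition degree :: "nat \<Rightarrow> (nat \<Rightarrow> nat \<Rightarrow> bool) \<Rightarrow> nat \<Rightarrow> nat" where
  "degree n E k = card {j \<in> {1..n}. E k j}"

definition graphical :: "nat \<Rightarrow> (nat \<Rightarrow> nat) \<Rightarrow> bool" where
  "graphical n e \<longleftrightarrow>
     (\<exists>E. simple_graph n E \<and> (\<forall>k \<in> {1..n}. degree n E k = e k))"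

definition reduced :: "(nat \<Rightarrow> nat) \<Rightarrow> nat \<Rightarrow> nat set \<Rightarrow> nat \<Rightarrow> nat" where
  "reduced d i A k = (if k = i then 0 else if k \<in> A then d k - 1 else d k)"

definition smallest :: "nat \<Rightarrow> nat set \<Rightarrow> nat set" where
  "smallest r S = {j \<in> S. card {l \<in> S. l < j} < r}"

end

theory Submission
  imports Defs
begin

lemma card_smallest:
  assumes fin: "finite S" and r: "r \<le> card S"
  shows "card (smallest r S) = r"
proof -
  define rk where "rk j = card {l\<in>S. l<j}" for j
  have mono: "rk j < rk j'" if "j\<in>S" "j'\<in>S" "j<j'" for j j'
    unfolding rk_def by (rule psubset_card_mono) (use that fin in auto)
  have inj: "inj_on rk S"
    by (rule inj_onI) (metis linorder_neqE_nat mono less_irrefl)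
  have sub: "rk ` S \<subseteq> {..<card S}"
  proof
    fix x assume "x \<in> rk ` S"
    then obtain j where j: "j \<in> S" "x = rk j" by auto
    have "{l\<in>S. l<j} \<subset> S" using j by auto
    then show "x \<in> {..<card S}" using j fin unfolding rk_def by (auto intro: psubset_card_mono)
  qed
  have img: "rk ` S = {..<card S}"
    using card_image[OF inj] sub by (metis card_lessThan card_subset_eq finite_lessThan)
  have sm: "smallest r S = {j\<in>S. rk j < r}" unfolding smallest_def rk_def by simp
  have "rk ` smallest r S = {x \<in> rk ` S. x < r}" unfolding sm by auto
  also have "\<dots> = {..<r}" using img r by auto
  finally have "card (rk ` smallest r S) = r" by simp
  moreover have "inj_on rk (smallest r S)" using inj sm by (auto intro: inj_on_subset)
  ultimately show ?thesis by (simp add: card_image)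
qed

lemma smallest_sub: "smallest r S \<subseteq> S" unfolding smallest_def by auto

lemma smallest_less:
  assumes "l \<in> smallest r S" "u \<in> S" "u \<notin> smallest r S"
  shows "l < u"
proof (rule ccontr)
  assume "\<not> l < u"
  moreover have "l \<noteq> u" using assms by auto
  ultimately have "u < l" by simp
  then have "{x\<in>S. x<u} \<subseteq> {x\<in>S. x<l}" by auto
  then have "card {x\<in>S. x<u} \<le> card {x\<in>S. x<l}" by (intro card_mono) auto
  then show False using assms unfolding smallest_def by auto
qed

lemma card_swap1: "finite A \<Longrightarrow> x \<in> A \<Longrightarrow> y \<notin> A \<Longrightarrow> card (insert y (A - {x})) = card A"
  by (simp add: card_insert_disjoint card_Diff_singleton)
   (metis Suc_pred card_gt_0_iff empty_iff)

definition sw :: "(nat \<Rightarrow> nat \<Rightarrow> bool) \<Rightarrow> nat \<Rightarrow> nat \<Rightarrow> nat \<Rightarrow> nat \<Rightarrow> nat \<Rightarrow> nat \<Rightarrow> bool" where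
  "sw E a b c e x y \<longleftrightarrow>
     (E x y \<and> \<not>(x=a\<and>y=b) \<and> \<not>(x=b\<and>y=a) \<and> \<not>(x=c\<and>y=e) \<and> \<not>(x=e\<and>y=c))
     \<or> (x=a\<and>y=c) \<or> (x=c\<and>y=a) \<or> (x=b\<and>y=e) \<or> (x=e\<and>y=b)"

lemma sw_graph:
  assumes G: "simple_graph n E" and ab: "E a b" and ce: "E c e"
    and nac: "\<not> E a c" and nbe: "\<not> E b e"
    and dist: "a\<noteq>b" "a\<noteq>c" "a\<noteq>e" "b\<noteq>c" "b\<noteq>e" "c\<noteq>e"
  shows "simple_graph n (sw E a b c e)"
    and "degree n (sw E a b c e) k = degree n E k"
proof -
  have sym: "E x y \<Longrightarrow> E y x" for x y using G unfolding simple_graph_def by blast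
  have inV: "E x y \<Longrightarrow> x \<in> {1..n} \<and> y \<in> {1..n}" for x y using G unfolding simple_graph_def by blast
  have irr: "\<not> E x x" for x using G unfolding simple_graph_def by blast
  have V: "a \<in> {1..n}" "b \<in> {1..n}" "c \<in> {1..n}" "e \<in> {1..n}" using inV ab ce by auto
  show "simple_graph n (sw E a b c e)"
    unfolding simple_graph_def sw_def using V inV sym irr dist by auto
  define N where "N F k = {j\<in>{1..n}. F k j}" for F :: "nat \<Rightarrow> nat \<Rightarrow> bool" and k
  have fin: "finite (N E k)" for k unfolding N_def by auto
  have "card (N (sw E a b c e) k) = card (N E k)"
  proof -
    consider "k = a" | "k = b" | "k = c" | "k = e" | "k\<noteq>a" "k\<noteq>b" "k\<noteq>c" "k\<noteq>e" by blast
    then show ?thesis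
    proof cases
      case 1
      have "N (sw E a b c e) k = insert c (N E k - {b})"
        unfolding N_def sw_def using 1 V dist by auto
      moreover have "b \<in> N E k" "c \<notin> N E k" using 1 V ab nac unfolding N_def by auto
      ultimately show ?thesis by (metis card_swap1 fin)
    next
      case 2
      have "N (sw E a b c e) k = insert e (N E k - {a})"
        unfolding N_def sw_def using 2 V dist by auto
      moreover have "a \<in> N E k" "e \<notin> N E k" using 2 V ab nbe sym unfolding N_def by auto
      ultimately show ?thesis by (metis card_swap1 fin)
    next
      case 3
      have "N (sw E a b c e) k = insert a (N E k - {e})"
        unfolding N_def sw_def using 3 V dist by auto
      moreover have "e \<in> N E k" "a \<notin> N E k" using 3 V ce nac sym unfolding N_def by auto
      ultimately show ?thesis by (metis card_swap1 fin)
    next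
      case 4
      have "N (sw E a b c e) k = insert b (N E k - {c})"
        unfolding N_def sw_def using 4 V dist by auto
      moreover have "c \<in> N E k" "b \<notin> N E k" using 4 V ce nbe sym unfolding N_def by auto
      ultimately show ?thesis by (metis card_swap1 fin)
    next
      case 5
      then have "N (sw E a b c e) k = N E k" unfolding N_def sw_def by auto
      then show ?thesis by simp
    qed
  qed
  then show "degree n (sw E a b c e) k = degree n E k" unfolding degree_def N_def by simp
qed

lemma reach:
  assumes iV: "i \<in> {1..n}"
    and mono: "\<forall>k l. 1 \<le> k \<and> k \<le> l \<and> l \<le> n \<longrightarrow> d l \<le> d k"
    and LS: "L \<subseteq> {1..n} - (X \<union> {i})"
    and cL: "card L = d i"
    and Lless: "\<forall>l\<in>L. \<forall>u\<in>({1..n} - (X \<union> {i})) - L. l < u"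
  shows "card (L - {j\<in>{1..n}. E i j}) = m \<Longrightarrow> simple_graph n E \<Longrightarrow> (\<forall>k\<in>{1..n}. degree n E k = d k)
     \<Longrightarrow> (\<forall>j\<in>X. \<not> E i j) \<Longrightarrow>
     \<exists>E'. simple_graph n E' \<and> (\<forall>k\<in>{1..n}. degree n E' k = d k) \<and> {j\<in>{1..n}. E' i j} = L"
proof (induction m arbitrary: E rule: less_induct)
  case (less m E)
  note G = less.prems(2) and dg = less.prems(3) and nX = less.prems(4)
  have sym: "E x y \<Longrightarrow> E y x" for x y using G unfolding simple_graph_def by blast
  have inV: "E x y \<Longrightarrow> x \<in> {1..n} \<and> y \<in> {1..n}" for x y using G unfolding simple_graph_def by blast
  have irr: "\<not> E x x" for x using G unfolding simple_graph_def by blast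
  define N where "N = {j\<in>{1..n}. E i j}"
  have NS: "N \<subseteq> {1..n} - (X \<union> {i})" unfolding N_def using irr nX by auto
  have cN: "card N = d i" using dg iV unfolding N_def degree_def by auto
  have finL: "finite L" using LS finite_subset by blast
  have finN: "finite N" unfolding N_def by auto
  show ?case
  proof (cases "N = L")
    case True then show ?thesis using G dg unfolding N_def by blast
  next
    case False
    have "\<not> L \<subseteq> N" using False card_subset_eq[OF finN] cN cL by metis
    then obtain l where l: "l \<in> L" "l \<notin> N" by blast
    have "\<not> N \<subseteq> L" using False card_subset_eq[OF finL] cN cL by metis
    then obtain u where u: "u \<in> N" "u \<notin> L" by blast
    have lu: "l < u" using Lless l u NS by blast
    have lV: "l \<in> {1..n}" "l \<noteq> i" "l \<notin> X" using l LS by auto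
    have uV: "u \<in> {1..n}" "u \<noteq> i" "u \<notin> X" using u NS by auto
    have dul: "d u \<le> d l" using mono lV uV lu by auto
    have Eiu: "E i u" using u N_def by auto
    have nEil: "\<not> E i l" using l lV N_def by auto
    have "\<exists>w. E l w \<and> w \<noteq> u \<and> \<not> E u w"
    proof (rule ccontr)
      assume H: "\<not> ?thesis"
      define A where "A = {j\<in>{1..n}. E l j} - {u}"
      define B where "B = {j\<in>{1..n}. E u j} - {l}"
      have "A \<subseteq> B" using H irr unfolding A_def B_def by auto
      moreover have "i \<in> B" "i \<notin> A" unfolding A_def B_def using Eiu sym nEil lV iV by auto
      ultimately have "A \<subset> B" by blast
      then have "card A < card B" by (intro psubset_card_mono) (auto simp add: B_def)
      moreover have "card A = d l - (if E l u then 1 else 0)"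
        unfolding A_def using dg lV uV unfolding degree_def by (simp add: card_Diff_singleton_if)
      moreover have "card B = d u - (if E u l then 1 else 0)"
        unfolding B_def using dg lV uV unfolding degree_def by (simp add: card_Diff_singleton_if)
      moreover have "E l u = E u l" using sym by blast
      ultimately show False using dul by (auto split: if_splits)
    qed
    then obtain w where w: "E l w" "w \<noteq> u" "\<not> E u w" by blast
    have wd: "w \<noteq> l" "w \<noteq> i" using w irr nEil sym by auto
    define E' where "E' = sw E i u l w"
    have G': "simple_graph n E'" and dg': "\<forall>k\<in>{1..n}. degree n E' k = d k"
      using sw_graph[OF G Eiu w(1) nEil w(3)] lu lV uV wd w dg unfolding E'_def by auto
    have N': "{j\<in>{1..n}. E' i j} = insert l (N - {u})"
      unfolding E'_def sw_def N_def using lV uV wd w lu by auto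
    have nX': "\<forall>j\<in>X. \<not> E' i j"
    proof (intro ballI notI)
      fix j assume j: "j \<in> X" "E' i j"
      then have "j \<in> {1..n}" using G' unfolding simple_graph_def by blast
      then have "j \<in> insert l (N - {u})" using N' j by blast
      then show False using j lV nX unfolding N_def by auto
    qed
    have "L - {j\<in>{1..n}. E' i j} = (L - N) - {l}" using N' u by auto
    then have "card (L - {j\<in>{1..n}. E' i j}) < m"
      using less.prems(1) l finL unfolding N_def
      by (metis (no_types, lifting) DiffI card_Diff1_less finite_Diff mem_Collect_eq)
    from less.IH[OF this refl G' dg' nX'] show ?thesis .
  qed
qed

theorem theorem3:
  fixes n i :: nat and d :: "nat \<Rightarrow> nat" and X :: "nat set"
  assumes "n \<ge> 2"
    and "\<forall>k l. 1 \<le> k \<and> k \<le> l \<and> l \<le> n \<longrightarrow> d l \<le> d k"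
    and "\<forall>k \<in> {1..n}. d k \<ge> 1"
    and "i \<in> {1..n}"
    and "X \<subseteq> {1..n} - {i}"
    and "int (card X) \<le> int n - 1 - int (d i)"
  shows "(\<exists>E. simple_graph n E \<and> (\<forall>k \<in> {1..n}. degree n E k = d k)
              \<and> (\<forall>j \<in> X. \<not> E i j))
         \<longleftrightarrow> graphical n (reduced d i (smallest (d i) ({1..n} - (X \<union> {i}))))"
proof -
  define S where "S = {1..n} - (X \<union> {i})"
  define L where "L = smallest (d i) S"
  have finS: "finite S" unfolding S_def by auto
  have "S = ({1..n} - {i}) - X" unfolding S_def by auto
  then have "card S = card ({1..n} - {i}) - card X"
    using assms(5) by (simp add: card_Diff_subset finite_subset)
  also have "card ({1..n} - {i}) = n - 1" using assms(4) by simp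
  finally have cS: "card S = n - 1 - card X" .
  have "d i \<le> card S" using cS assms(6) by linarith
  then have cL: "card L = d i" unfolding L_def using card_smallest finS by blast
  have LS: "L \<subseteq> S" unfolding L_def by (rule smallest_sub)
  have Lless: "\<forall>l\<in>L. \<forall>u\<in>S - L. l < u" unfolding L_def using smallest_less by blast
  have finL: "finite L" using LS finS finite_subset by blast
  show ?thesis unfolding S_def[symmetric] L_def[symmetric]
  proof
    assume "\<exists>E. simple_graph n E \<and> (\<forall>k \<in> {1..n}. degree n E k = d k) \<and> (\<forall>j \<in> X. \<not> E i j)"
    then obtain E0 where E0: "simple_graph n E0" "\<forall>k \<in> {1..n}. degree n E0 k = d k" "\<forall>j \<in> X. \<not> E0 i j"
      by blast
    obtain E where G: "simple_graph n E" and dg: "\<forall>k\<in>{1..n}. degree n E k = d k"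
      and NL: "{j\<in>{1..n}. E i j} = L"
      using reach[OF assms(4) assms(2) LS[unfolded S_def] cL Lless[unfolded S_def] refl E0] by blast
    have sym: "E x y \<Longrightarrow> E y x" for x y using G unfolding simple_graph_def by blast
    have inV: "E x y \<Longrightarrow> x \<in> {1..n} \<and> y \<in> {1..n}" for x y using G unfolding simple_graph_def by blast
    define E' where "E' x y = (E x y \<and> x \<noteq> i \<and> y \<noteq> i)" for x y
    have "simple_graph n E'" using G unfolding simple_graph_def E'_def by blast
    moreover have "degree n E' k = reduced d i L k" if k: "k \<in> {1..n}" for k
    proof -
      consider "k = i" | "k \<noteq> i" "k \<in> L" | "k \<noteq> i" "k \<notin> L" by blast
      then show ?thesis
      proof cases
        case 1 then show ?thesis unfolding degree_def reduced_def E'_def by simp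
      next
        case 2
        have "E k i" using 2 NL sym by auto
        then have "{j\<in>{1..n}. E' k j} = {j\<in>{1..n}. E k j} - {i}" using 2 unfolding E'_def by auto
        moreover have "i \<in> {j\<in>{1..n}. E k j}" using \<open>E k i\<close> assms(4) by auto
        ultimately have "degree n E' k = degree n E k - 1" unfolding degree_def by simp
        then show ?thesis using dg k 2 unfolding reduced_def by simp
      next
        case 3
        have "\<not> E k i" using 3 NL sym k by auto
        then have "{j\<in>{1..n}. E' k j} = {j\<in>{1..n}. E k j}" using 3 unfolding E'_def by auto
        then show ?thesis using dg k 3 unfolding reduced_def degree_def by simp
      qed
    qed
    ultimately show "graphical n (reduced d i L)" unfolding graphical_def by blast
  next
    assume "graphical n (reduced d i L)"
    then obtain E' where G: "simple_graph n E'" and dg: "\<forall>k\<in>{1..n}. degree n E' k = reduced d i L k"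
      unfolding graphical_def by blast
    have sym: "E' x y \<Longrightarrow> E' y x" for x y using G unfolding simple_graph_def by blast
    have inV: "E' x y \<Longrightarrow> x \<in> {1..n} \<and> y \<in> {1..n}" for x y using G unfolding simple_graph_def by blast
    have "card {j\<in>{1..n}. E' i j} = 0" using dg assms(4) unfolding degree_def reduced_def by auto
    then have noi: "\<not> E' i j" for j using inV[of i j] by auto
    have LV: "L \<subseteq> {1..n}" "i \<notin> L" "L \<inter> X = {}" using LS unfolding S_def by auto
    define E where "E x y = (E' x y \<or> (x = i \<and> y \<in> L) \<or> (y = i \<and> x \<in> L))" for x y
    have "simple_graph n E" using G LV assms(4) unfolding simple_graph_def E_def by blast
    moreover have "degree n E k = d k" if k: "k \<in> {1..n}" for k
    proof -
      consider "k = i" | "k \<noteq> i" "k \<in> L" | "k \<noteq> i" "k \<notin> L" by blast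
      then show ?thesis
      proof cases
        case 1
        then have "{j\<in>{1..n}. E k j} = L" using noi LV unfolding E_def by auto
        then show ?thesis using cL 1 unfolding degree_def by simp
      next
        case 2
        have "{j\<in>{1..n}. E k j} = insert i {j\<in>{1..n}. E' k j}"
          using 2 assms(4) LV unfolding E_def by auto
        moreover have "i \<notin> {j\<in>{1..n}. E' k j}" using noi sym by blast
        ultimately have "degree n E k = degree n E' k + 1" unfolding degree_def by simp
        moreover have "d k \<ge> 1" using assms(3) k by blast
        ultimately show ?thesis using dg k 2 unfolding reduced_def by simp
      next
        case 3
        then have "{j\<in>{1..n}. E k j} = {j\<in>{1..n}. E' k j}" unfolding E_def by auto
        then show ?thesis using dg k 3 unfolding reduced_def degree_def by simp
      qed
    qed
    moreover have "\<forall>j\<in>X. \<not> E i j" using noi LV unfolding E_def by auto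
    ultimately show "\<exists>E. simple_graph n E \<and> (\<forall>k \<in> {1..n}. degree n E k = d k) \<and> (\<forall>j \<in> X. \<not> E i j)"
      by blast
  qed
qed

end
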